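(* Let $0<q\leq 1$, let $D\in\mathbb{R}^{n\times d}$ be a frame with frame bounds $0<\mathcal{L}\leq\mathcal{U}<\infty$, $\kappa=\mathcal{U}/\mathcal{L}$, let $A\in\mathbb{R}^{m\times n}$, let $s<a$ be positive integers and $\rho=s/a$. Assume $A$ satisfies the $(D^{\dagger},q)$-RIP of order $s+a$ (with constants $\delta_a$ and $\delta_{s+a}<1$), and let $\Delta=\frac{1+\delta_a}{1-\delta_{s+a}}$. Then for any $h\in\mathbb{R}^n$, with $T$ the index set of the $s$ largest entries of $D^*h$ in magnitude, $$\|D_T^*h\|_q^{q}\leq\theta\|D_{T^c}^*h\|_q^q+\frac{\theta\mathcal{L}^{q/2}a^{1-q/2}\|Ah\|_q^q}{1+\delta_a},$$ where $$\theta=2^{-q/2}\left(1+\sqrt{1+4\kappa^{-2}\Delta^{-2/q}}\right)^{q/2}\kappa^q\Delta\rho^{1-q/2}.$$ In particular, if $\rho^{1-q/2}\left(\rho^{2/q-1}+1\right)^{q/2}\kappa^q(1+\delta_a)<1-\delta_{s+a}$, then $\theta<1$.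
   Context: $D$ is a frame with frame bounds $\mathcal{L},\mathcal{U}$ if $\mathcal{L}\|f\|_2^2\leq\|D^*f\|_2^2\leq\mathcal{U}\|f\|_2^2$ for all $f\in\mathbb{R}^n$; $D^{\dagger}=(DD^* )^{-1}D$. $A$ obeys the $(D^\dagger,q)$-RIP of order $k$ with constant $\delta\in[0,1)$ if $(1-\delta)\|D^\dagger v\|_2^q\leq\|AD^\dagger v\|_q^q\leq(1+\delta)\|D^\dagger v\|_2^q$ for all $v\in\mathbb{R}^d$ with at most $k$ nonzero entries; $\delta_k$ is the smallest such $\delta$. For $S\subset[d]$, $D_S^*h$ denotes $D^*h$ restricted to $S$, and $T^c=[d]\setminus T$. *)

theory Defs
  imports "HOL-Analysis.Analysis"
begin

text \<open>D is an n x d real matrix (type real^'d^'n); D^* is its transpose.\<close>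

definition frame_bounds :: "real^'d^'n \<Rightarrow> real \<Rightarrow> real \<Rightarrow> bool" where
  "frame_bounds D L U \<longleftrightarrow>
     (\<forall>f::real^'n. L * (norm f)\<^sup>2 \<le> (norm (transpose D *v f))\<^sup>2 \<and>
                   (norm (transpose D *v f))\<^sup>2 \<le> U * (norm f)\<^sup>2)"

definition dagger :: "real^'d^'n \<Rightarrow> real^'d^'n" where
  "dagger D = matrix_inv (D ** transpose D) ** D"

definition qnorm_pow_on :: "'i set \<Rightarrow> real \<Rightarrow> real^'i \<Rightarrow> real" where
  "qnorm_pow_on S q x = (\<Sum>i\<in>S. \<bar>x $ i\<bar> powr q)"

definition qnorm_pow :: "real \<Rightarrow> real^'i \<Rightarrow> real" where
  "qnorm_pow q x = qnorm_pow_on UNIV q x"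

definition sparse :: "nat \<Rightarrow> real^'i \<Rightarrow> bool" where
  "sparse k v \<longleftrightarrow> card {i. v $ i \<noteq> 0} \<le> k"

definition rip :: "real^'d^'n \<Rightarrow> real^'n^'m \<Rightarrow> real \<Rightarrow> nat \<Rightarrow> real \<Rightarrow> bool" where
  "rip D A q k \<delta> \<longleftrightarrow> 0 \<le> \<delta> \<and> \<delta> < 1 \<and>
     (\<forall>v::real^'d. sparse k v \<longrightarrow>
        (1 - \<delta>) * norm (dagger D *v v) powr q \<le> qnorm_pow q (A *v (dagger D *v v)) \<and>
        qnorm_pow q (A *v (dagger D *v v)) \<le> (1 + \<delta>) * norm (dagger D *v v) powr q)"

definition rip_const :: "real^'d^'n \<Rightarrow> real^'n^'m \<Rightarrow> real \<Rightarrow> nat \<Rightarrow> real" where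
  "rip_const D A q k = Inf {\<delta>. rip D A q k \<delta>}"

end

theory Submission
  imports Defs
begin

declare transpose_matrix_vector[simp del]

lemma inv_props: "invertible (M::real^'n^'n) \<Longrightarrow> M ** matrix_inv M = mat 1 \<and> matrix_inv M ** M = mat 1"
  unfolding matrix_inv_def invertible_def by (rule someI_ex)

lemma adj: "inner (transpose D *v x) y = inner x ((D::real^'d^'n) *v y)"
  by (simp add: transpose_matrix_vector dot_lmul_matrix)

lemma frame_inv:
  fixes D :: "real^'d^'n"
  assumes "frame_bounds D L U" "0 < L"
  shows "invertible (D ** transpose D)"
proof -
  have "inj ((*v) (D ** transpose D))"
  proof (rule linear_injective_0[THEN iffD2])
    show "linear ((*v) (D ** transpose D))" by simp
    show "\<forall>x. (D ** transpose D) *v x = 0 \<longrightarrow> x = 0"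
    proof (intro allI impI)
      fix x :: "real^'n" assume h: "(D ** transpose D) *v x = 0"
      have "inner x ((D ** transpose D) *v x) = (norm (transpose D *v x))\<^sup>2"
        by (simp add: adj[symmetric] matrix_vector_mul_assoc[symmetric] power2_norm_eq_inner)
      hence "(norm (transpose D *v x))\<^sup>2 = 0" using h by simp
      moreover have "L * (norm x)\<^sup>2 \<le> (norm (transpose D *v x))\<^sup>2" using assms(1) unfolding frame_bounds_def by blast
      ultimately show "x = 0" using assms(2)
        by (metis mult_le_0_iff norm_eq_zero not_less power2_eq_square zero_le_mult_iff zero_less_norm_iff)
    qed
  qed
  then show ?thesis
    by (simp add: invertible_left_inverse matrix_left_invertible_injective)
qed

lemma dagger_left:
  fixes D :: "real^'d^'n"
  assumes "frame_bounds D L U" "0 < L"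
  shows "dagger D *v (transpose D *v h) = h"
  using inv_props[OF frame_inv[OF assms]]
  by (simp add: dagger_def matrix_vector_mul_assoc matrix_mul_assoc)

lemma dagger_right:
  fixes D :: "real^'d^'n"
  assumes "frame_bounds D L U" "0 < L"
  shows "D *v (transpose D *v (dagger D *v x)) = D *v x"
proof -
  have "D ** (transpose D ** (matrix_inv (D ** transpose D) ** D)) = ((D ** transpose D) ** matrix_inv (D ** transpose D)) ** D"
    by (simp add: matrix_mul_assoc)
  then show ?thesis using inv_props[OF frame_inv[OF assms]]
    by (simp add: dagger_def matrix_vector_mul_assoc)
qed

lemma dagger_norm:
  fixes D :: "real^'d^'n"
  assumes "frame_bounds D L U" "0 < L"
  shows "L * (norm (dagger D *v x))\<^sup>2 \<le> (norm x)\<^sup>2"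
proof -
  define y where "y = dagger D *v x"
  have "(norm (transpose D *v y))\<^sup>2 = inner y (D *v (transpose D *v y))"
    by (simp add: adj[symmetric] power2_norm_eq_inner)
  also have "\<dots> = inner y (D *v x)" by (simp add: y_def dagger_right[OF assms])
  also have "\<dots> = inner (transpose D *v y) x" by (simp add: adj)
  also have "\<dots> \<le> norm (transpose D *v y) * norm x" by (rule norm_cauchy_schwarz)
  finally have "norm (transpose D *v y) \<le> norm x"
    by (metis mult_le_cancel_left norm_ge_zero not_le power2_eq_square zero_less_mult_iff order.trans)
  moreover have "L * (norm y)\<^sup>2 \<le> (norm (transpose D *v y))\<^sup>2" using assms(1) unfolding frame_bounds_def by blast
  ultimately show ?thesis unfolding y_def[symmetric]
    by (meson norm_ge_zero order.trans power_mono)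
qed

lemma dagger_inner:
  fixes D :: "real^'d^'n"
  assumes "frame_bounds D L U" "0 < L"
  shows "inner x (transpose D *v h) \<le> sqrt U * norm (dagger D *v x) * norm (transpose D *v h)"
proof -
  define y where "y = dagger D *v x"
  have "inner x (transpose D *v h) = inner (D *v x) h" by (metis adj inner_commute)
  also have "\<dots> = inner (D *v (transpose D *v y)) h" by (simp add: y_def dagger_right[OF assms])
  also have "\<dots> = inner (transpose D *v y) (transpose D *v h)" by (simp add: adj inner_commute)
  also have "\<dots> \<le> norm (transpose D *v y) * norm (transpose D *v h)" by (rule norm_cauchy_schwarz)
  also have "\<dots> \<le> sqrt U * norm y * norm (transpose D *v h)"
  proof -
    have "(norm (transpose D *v y))\<^sup>2 \<le> U * (norm y)\<^sup>2" using assms(1) unfolding frame_bounds_def by blast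
    hence "norm (transpose D *v y) \<le> sqrt U * norm y"
      by (metis norm_ge_zero real_le_rsqrt real_sqrt_mult real_sqrt_abs abs_norm_cancel)
    thus ?thesis by (simp add: mult_right_mono)
  qed
  finally show ?thesis by (simp add: y_def)
qed


lemma bern: fixes u p :: real assumes "0 < p" "p \<le> 1" "0 \<le> u" shows "u powr p \<le> p * u + (1 - p)"
proof (cases "u = 0")
  case True then show ?thesis using assms by simp
next
  case False
  then show ?thesis using Youngs_inequality_0[of p "1-p" u 1] assms by simp
qed

lemma powr_subadd: fixes x y p :: real assumes "0 < p" "p \<le> 1" "0 \<le> x" "0 \<le> y"
  shows "(x + y) powr p \<le> x powr p + y powr p"
proof (cases "x + y = 0")
  case True then show ?thesis using assms by simp
next
  case False
  hence s: "x + y > 0" using assms by simp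
  have hx: "x / (x+y) \<le> (x/(x+y)) powr p"
    using powr_mono'[of p 1 "x/(x+y)"] assms s by simp
  have hy: "y / (x+y) \<le> (y/(x+y)) powr p"
    using powr_mono'[of p 1 "y/(x+y)"] assms s by simp
  have "1 \<le> (x/(x+y)) powr p + (y/(x+y)) powr p"
    using hx hy s by (smt (verit) add_divide_distrib divide_self)
  hence "(x+y) powr p * 1 \<le> (x+y) powr p * ((x/(x+y)) powr p + (y/(x+y)) powr p)"
    using mult_left_mono[of 1 _ "(x+y) powr p"] by simp
  also have "\<dots> = x powr p + y powr p" using s assms
    by (simp add: powr_divide distrib_left)
  finally show ?thesis by simp
qed

lemma powr_sum_le: fixes f :: "'a \<Rightarrow> real" and p :: real assumes "0 < p" "p \<le> 1" "finite S" "\<And>i. i \<in> S \<Longrightarrow> 0 \<le> f i"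
  shows "(\<Sum>i\<in>S. f i) powr p \<le> (\<Sum>i\<in>S. f i powr p)"
  using assms(3,4)
proof (induction S rule: finite_induct)
  case empty then show ?case by simp
next
  case (insert x F)
  have "(\<Sum>i\<in>insert x F. f i) powr p = (f x + (\<Sum>i\<in>F. f i)) powr p" using insert by simp
  also have "\<dots> \<le> f x powr p + (\<Sum>i\<in>F. f i) powr p"
    by (rule powr_subadd) (use assms insert in \<open>auto intro: sum_nonneg\<close>)
  also have "\<dots> \<le> f x powr p + (\<Sum>i\<in>F. f i powr p)" using insert by simp
  finally show ?case using insert by simp
qed

lemma holder_pow: fixes f :: "'a \<Rightarrow> real" and p :: real assumes "0 < p" "p \<le> 1" "finite S" "card S = n" "n > 0" "\<And>i. i \<in> S \<Longrightarrow> 0 \<le> f i"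
  shows "(\<Sum>i\<in>S. f i powr p) \<le> real n powr (1 - p) * (\<Sum>i\<in>S. f i) powr p"
proof -
  define m where "m = (\<Sum>i\<in>S. f i) / n"
  have m0: "m \<ge> 0" unfolding m_def using assms by (simp add: sum_nonneg)
  show ?thesis
  proof (cases "m = 0")
    case True
    hence "(\<Sum>i\<in>S. f i) = 0" unfolding m_def using assms by simp
    hence "\<forall>i\<in>S. f i = 0" using assms sum_nonneg_eq_0_iff by blast
    thus ?thesis by simp
  next
    case False
    hence mp: "m > 0" using m0 by simp
    have "(\<Sum>i\<in>S. f i powr p) = (\<Sum>i\<in>S. m powr p * (f i / m) powr p)"
      using mp assms by (intro sum.cong) (auto simp: powr_divide)
    also have "\<dots> \<le> (\<Sum>i\<in>S. m powr p * (p * (f i / m) + (1 - p)))"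
      by (intro sum_mono mult_left_mono bern) (use assms mp in auto)
    also have "\<dots> = (\<Sum>i\<in>S. (m powr p * p / m) * f i + m powr p * (1-p))"
      using mp by (intro sum.cong) (auto simp: field_simps)
    also have "\<dots> = m powr p * (p / m * (\<Sum>i\<in>S. f i) + n * (1 - p))"
      using assms by (simp only: sum.distrib sum_distrib_left[symmetric] sum_constant) (simp add: algebra_simps)
    also have "\<dots> = m powr p * n"
      using mp assms unfolding m_def by (simp add: field_simps)
    also have "\<dots> = real n powr (1 - p) * (\<Sum>i\<in>S. f i) powr p"
    proof -
      have "m powr p = (\<Sum>i\<in>S. f i) powr p / real n powr p" unfolding m_def by (simp add: powr_divide)
      moreover have e2: "real n = real n powr (1 - p) * real n powr p" using assms
        by (simp add: powr_add[symmetric])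
      ultimately have e1: "m powr p * real n powr p = (\<Sum>i\<in>S. f i) powr p" using assms by (simp add: field_simps)
      have "m powr p * real n = m powr p * (real n powr (1 - p) * real n powr p)" using e2 by simp
      also have "\<dots> = real n powr (1 - p) * (m powr p * real n powr p)" by (simp add: algebra_simps)
      finally show ?thesis using e1 by simp
    qed
    finally show ?thesis .
  qed
qed


definition restr :: "'i set \<Rightarrow> real^'i \<Rightarrow> real^'i" where
  "restr S v = (\<chi> i. if i \<in> S then v$i else 0)"

lemma restr_nth[simp]: "restr S v $ i = (if i \<in> S then v$i else 0)"
  by (simp add: restr_def)

lemma norm_sq_sum: "(norm (x::real^'i))\<^sup>2 = (\<Sum>i\<in>UNIV. (x$i)\<^sup>2)"
  by (simp add: norm_vec_def L2_set_def sum_nonneg)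

lemma norm_restr_sq: "(norm (restr S (v::real^'i)))\<^sup>2 = (\<Sum>i\<in>S. (v$i)\<^sup>2)"
proof -
  have "(norm (restr S v))\<^sup>2 = (\<Sum>i\<in>UNIV. if i \<in> S then (v$i)\<^sup>2 else 0)"
    unfolding norm_sq_sum by (intro sum.cong) auto
  also have "\<dots> = (\<Sum>i\<in>S. (v$i)\<^sup>2)" by (simp add: sum.If_cases)
  finally show ?thesis .
qed

lemma inner_restr: "inner (restr S (v::real^'i)) v = (norm (restr S v))\<^sup>2"
proof -
  have "inner (restr S v) v = (\<Sum>i\<in>UNIV. if i \<in> S then (v$i)\<^sup>2 else 0)"
    unfolding inner_vec_def by (intro sum.cong) (auto simp: power2_eq_square)
  also have "\<dots> = (\<Sum>i\<in>S. (v$i)\<^sup>2)" by (simp add: sum.If_cases)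
  finally show ?thesis by (simp add: norm_restr_sq)
qed

lemma norm_split: "(norm (v::real^'i))\<^sup>2 = (norm (restr S v))\<^sup>2 + (norm (restr (-S) v))\<^sup>2"
proof -
  have "(\<Sum>i\<in>S \<union> -S. (v$i)\<^sup>2) = (\<Sum>i\<in>S. (v$i)\<^sup>2) + (\<Sum>i\<in>-S. (v$i)\<^sup>2)"
    by (rule sum.union_disjoint) auto
  moreover have "S \<union> -S = UNIV" by auto
  ultimately have "(\<Sum>i\<in>UNIV. (v$i)\<^sup>2) = (\<Sum>i\<in>S. (v$i)\<^sup>2) + (\<Sum>i\<in>-S. (v$i)\<^sup>2)" by simp
  then show ?thesis using norm_restr_sq[of S v] norm_restr_sq[of "-S" v] norm_sq_sum[of v] by linarith
qed

lemma restr_sparse: "card S \<le> k \<Longrightarrow> sparse k (restr S (v::real^'i))"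
  unfolding sparse_def
  by (rule order.trans[OF card_mono]) auto

lemma restr_add: "S \<inter> S' = {} \<Longrightarrow> restr (S \<union> S') v = restr S v + restr S' v"
  by (auto simp: vec_eq_iff)

lemma restr_UN:
  assumes "finite J" "\<forall>j\<in>J. \<forall>k\<in>J. j \<noteq> k \<longrightarrow> B j \<inter> B k = {}"
  shows "restr (\<Union>j\<in>J. B j) v = (\<Sum>j\<in>J. restr (B j) v)"
  using assms
proof (induction J rule: finite_induct)
  case empty then show ?case by (simp add: vec_eq_iff)
next
  case (insert x F)
  have "B x \<inter> (\<Union>j\<in>F. B j) = {}" using insert by auto
  then show ?case using insert by (simp add: restr_add)
qed

lemma restr_all: "restr UNIV v = v" by (simp add: vec_eq_iff)

lemma qnorm_sum:
  fixes x :: "'j \<Rightarrow> real^'i"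
  assumes "0 < q" "q \<le> 1" "finite J"
  shows "qnorm_pow q (\<Sum>j\<in>J. x j) \<le> (\<Sum>j\<in>J. qnorm_pow q (x j))"
proof -
  have "qnorm_pow q (\<Sum>j\<in>J. x j) = (\<Sum>i\<in>UNIV. \<bar>\<Sum>j\<in>J. x j $ i\<bar> powr q)"
    by (simp add: qnorm_pow_def qnorm_pow_on_def)
  also have "\<dots> \<le> (\<Sum>i\<in>UNIV. (\<Sum>j\<in>J. \<bar>x j $ i\<bar>) powr q)"
    by (intro sum_mono powr_mono2) (use assms in auto)
  also have "\<dots> \<le> (\<Sum>i\<in>UNIV. (\<Sum>j\<in>J. \<bar>x j $ i\<bar> powr q))"
    by (intro sum_mono powr_sum_le) (use assms in auto)
  also have "\<dots> = (\<Sum>j\<in>J. qnorm_pow q (x j))"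
    by (simp add: qnorm_pow_def qnorm_pow_on_def sum.swap[of _ UNIV])
  finally show ?thesis .
qed

lemma qnorm_add:
  assumes "0 < q" "q \<le> 1"
  shows "qnorm_pow q (x + y) \<le> qnorm_pow q x + qnorm_pow q (y::real^'i)"
  using qnorm_sum[OF assms, of "{True,False}" "\<lambda>b. if b then x else y"] by simp

lemma qnorm_minus: "qnorm_pow q (- x) = qnorm_pow q (x::real^'i)"
  by (simp add: qnorm_pow_def qnorm_pow_on_def)



lemma powr_sq: "0 \<le> (y::real) \<Longrightarrow> y powr q = (y\<^sup>2) powr (q/2)"
proof (cases "y = 0")
  case False
  assume "0 \<le> y"
  hence "y\<^sup>2 = y powr 2" using False by (simp add: powr_numeral)
  then show ?thesis by (simp add: powr_powr)
qed simp

lemma sq_le_from_powr: assumes "0 < q" "0 \<le> (x::real)" "x powr q \<le> c"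
  shows "x\<^sup>2 \<le> c powr (2/q)"
proof -
  have "(x powr q) powr (2/q) = x powr 2" using assms by (simp add: powr_powr)
  hence "x\<^sup>2 = (x powr q) powr (2/q)" using assms by (simp add: powr_numeral)
  also have "\<dots> \<le> c powr (2/q)" using assms by (intro powr_mono2) auto
  finally show ?thesis .
qed

lemma key_powr: assumes "0 < q" "0 < (a::real)" "0 \<le> Q"
  shows "(a * (Q/a) powr (2/q)) powr (q/2) = a powr (q/2 - 1) * Q"
proof -
  have "(a * (Q/a) powr (2/q)) powr (q/2) = a powr (q/2) * ((Q/a) powr (2/q)) powr (q/2)"
    using assms by (simp add: powr_mult)
  also have "((Q/a) powr (2/q)) powr (q/2) = Q/a" using assms by (simp add: powr_powr)
  also have "a powr (q/2) * (Q/a) = a powr (q/2 - 1) * Q" using assms by (simp add: powr_diff)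
  finally show ?thesis .
qed



lemma blocks:
  fixes v :: "real^'d" and C :: "'d set" and a :: nat and q :: real
  assumes a0: "a > 0" and q: "0 < q" "q \<le> 1"
  obtains B :: "nat \<Rightarrow> 'd set" and N :: nat where
    "B 0 \<subseteq> C" "\<And>j. card (B j) \<le> a"
    "restr (C - B 0) v = (\<Sum>j\<in>{1..<N}. restr (B j) v)"
    "(\<Sum>j\<in>{1..<N}. norm (restr (B j) v) powr q) \<le> real a powr (q/2-1) * qnorm_pow_on C q v"
proof -
  obtain xs where xs: "set xs = C" "distinct xs" using finite_distinct_list[of C] by auto
  define ys where "ys = sort_key (\<lambda>i. - \<bar>v$i\<bar>) xs"
  have ys: "set ys = C" "distinct ys" using xs by (auto simp: ys_def)
  have srt: "sorted (map (\<lambda>i. - \<bar>v$i\<bar>) ys)" by (simp add: ys_def)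
  define len where "len = length ys"
  have mono: "\<bar>v$(ys!l)\<bar> \<le> \<bar>v$(ys!k)\<bar>" if "k \<le> l" "l < len" for k l
    using sorted_nth_mono[OF srt that(1)] that by (simp add: len_def)
  have inj: "inj_on (\<lambda>k. ys!k) {..<len}" using ys(2) by (simp add: inj_on_def nth_eq_iff_index_eq len_def)
  define K where "K j = {k. k < len \<and> k div a = j}" for j
  define B where "B j = (\<lambda>k. ys!k) ` K j" for j
  define N where "N = Suc (len div a)"
  have Kfin: "finite (K j)" for j unfolding K_def by auto
  have Kiff: "k div a = j \<longleftrightarrow> j*a \<le> k \<and> k < j*a + a" for k j
  proof
    assume h: "k div a = j"
    have e: "k = j * a + k mod a" using div_mult_mod_eq[of k a] h by simp
    have "k mod a < a" using a0 by simp
    then show "j*a \<le> k \<and> k < j*a + a" using e by linarith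
  next
    assume h: "j*a \<le> k \<and> k < j*a + a"
    show "k div a = j" by (rule div_nat_eqI) (use h in \<open>auto simp: algebra_simps\<close>)
  qed
  have Ksub: "K j \<subseteq> {j*a..<j*a+a}" for j unfolding K_def using Kiff by auto
  have cardK: "card (K j) \<le> a" for j
    using card_mono[OF _ Ksub[of j]] by simp
  have Klen: "K j \<subseteq> {..<len}" for j unfolding K_def by auto
  have cardB: "card (B j) = card (K j)" for j
    unfolding B_def by (rule card_image) (rule inj_on_subset[OF inj Klen])
  have sumB: "(\<Sum>i\<in>B j. g i) = (\<Sum>k\<in>K j. g (ys!k))" for j and g :: "'d \<Rightarrow> real"
    unfolding B_def by (rule sum.reindex_cong[OF inj_on_subset[OF inj Klen]]) auto
  have BC: "B j \<subseteq> C" for j unfolding B_def K_def using ys(1) by (auto simp: len_def)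
  have disj: "B j \<inter> B j' = {}" if "j \<noteq> j'" for j j'
  proof (rule ccontr)
    assume "B j \<inter> B j' \<noteq> {}"
    then obtain k k' where kk: "k \<in> K j" "k' \<in> K j'" "ys!k = ys!k'" unfolding B_def by auto
    hence "k = k'" using inj Klen unfolding inj_on_def by blast
    thus False using kk that unfolding K_def by auto
  qed
  have memC: "x \<in> C \<Longrightarrow> \<exists>k<len. x = ys!k" for x
    using ys(1) by (metis in_set_conv_nth len_def)
  have UN: "(\<Union>j\<in>{1..<N}. B j) = C - B 0"
  proof
    show "(\<Union>j\<in>{1..<N}. B j) \<subseteq> C - B 0"
    proof
      fix x assume "x \<in> (\<Union>j\<in>{1..<N}. B j)"
      then obtain j where j: "j \<ge> 1" "x \<in> B j" by auto
      have "x \<in> C" using BC j by blast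
      moreover have "x \<notin> B 0" using disj[of j 0] j by auto
      ultimately show "x \<in> C - B 0" by simp
    qed
    show "C - B 0 \<subseteq> (\<Union>j\<in>{1..<N}. B j)"
    proof
      fix x assume x: "x \<in> C - B 0"
      then obtain k where k: "k < len" "x = ys!k" using memC by blast
      have "k \<in> K (k div a)" using k unfolding K_def by auto
      hence xb: "x \<in> B (k div a)" using k unfolding B_def by auto
      have "k div a \<noteq> 0"
      proof
        assume "k div a = 0"
        then have "x \<in> B 0" using xb by simp
        then show False using x by simp
      qed
      moreover have "k div a < N" unfolding N_def using k div_le_mono[of k len a] by simp
      ultimately show "x \<in> (\<Union>j\<in>{1..<N}. B j)" using xb by auto
    qed
  qed
  have UNall: "(\<Union>j\<in>{..<N}. B j) = C"
  proof
    show "(\<Union>j\<in>{..<N}. B j) \<subseteq> C" using BC by auto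
    show "C \<subseteq> (\<Union>j\<in>{..<N}. B j)"
    proof
      fix x assume x: "x \<in> C"
      then obtain k where k: "k < len" "x = ys!k" using memC by blast
      have "k \<in> K (k div a)" using k unfolding K_def by auto
      hence xb: "x \<in> B (k div a)" using k unfolding B_def by auto
      moreover have "k div a < N" unfolding N_def using k div_le_mono[of k len a] by simp
      ultimately show "x \<in> (\<Union>j\<in>{..<N}. B j)" by auto
    qed
  qed
  have restr_eq: "restr (C - B 0) v = (\<Sum>j\<in>{1..<N}. restr (B j) v)"
    unfolding UN[symmetric] by (rule restr_UN) (use disj in auto)
  have key: "norm (restr (B j) v) powr q \<le> real a powr (q/2-1) * qnorm_pow_on (B (j-1)) q v"
    if j1: "j \<ge> 1" for j
  proof (cases "B j = {}")
    case True
    have "restr (B j) v = 0" using True by (simp add: vec_eq_iff)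
    then show ?thesis by (simp add: qnorm_pow_on_def sum_nonneg)
  next
    case False
    then obtain k0 where k0: "k0 \<in> K j" unfolding B_def by auto
    have k0b: "j*a \<le> k0" "k0 < len" using k0 unfolding K_def using Kiff by auto
    define Q where "Q = qnorm_pow_on (B (j-1)) q v"
    have Keq: "K (j-1) = {(j-1)*a..<(j-1)*a+a}"
    proof -
      have "(j-1)*a + a = j*a" using j1 by (cases j) auto
      then show ?thesis unfolding K_def using Kiff k0b by auto
    qed
    have cK: "card (K (j-1)) = a" unfolding Keq by simp
    have Q0: "Q \<ge> 0" unfolding Q_def qnorm_pow_on_def by (simp add: sum_nonneg)
    have bound: "\<bar>v$i\<bar> powr q \<le> Q / a" if i: "i \<in> B j" for i
    proof -
      obtain l where l: "l \<in> K j" "i = ys!l" using i unfolding B_def by auto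
      have lb: "j*a \<le> l" "l < len" using l unfolding K_def using Kiff by auto
      have "(\<Sum>k\<in>K (j-1). \<bar>v$i\<bar> powr q) \<le> (\<Sum>k\<in>K (j-1). \<bar>v$(ys!k)\<bar> powr q)"
      proof (rule sum_mono)
        fix k assume "k \<in> K (j-1)"
        hence "k \<le> l" using Keq lb j1 by (cases j) auto
        hence "\<bar>v$(ys!l)\<bar> \<le> \<bar>v$(ys!k)\<bar>" using mono lb by blast
        then show "\<bar>v$i\<bar> powr q \<le> \<bar>v$(ys!k)\<bar> powr q" using l q by (intro powr_mono2) auto
      qed
      also have "\<dots> = Q" unfolding Q_def qnorm_pow_on_def by (simp add: sumB)
      finally have "real a * \<bar>v$i\<bar> powr q \<le> Q" using cK by simp
      then show ?thesis using a0 by (simp add: field_simps)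
    qed
    have "(norm (restr (B j) v))\<^sup>2 = (\<Sum>i\<in>B j. (v$i)\<^sup>2)" by (rule norm_restr_sq)
    also have "\<dots> \<le> (\<Sum>i\<in>B j. (Q/a) powr (2/q))"
    proof (rule sum_mono)
      fix i assume "i \<in> B j"
      then have "\<bar>v$i\<bar>\<^sup>2 \<le> (Q/a) powr (2/q)" using bound q by (intro sq_le_from_powr) auto
      then show "(v$i)\<^sup>2 \<le> (Q/a) powr (2/q)" by simp
    qed
    also have "\<dots> \<le> a * (Q/a) powr (2/q)" using cardB[of j] cardK[of j]
      by (simp add: mult_right_mono)
    finally have nb: "(norm (restr (B j) v))\<^sup>2 \<le> a * (Q/a) powr (2/q)" .
    have "norm (restr (B j) v) powr q = ((norm (restr (B j) v))\<^sup>2) powr (q/2)" by (rule powr_sq) simp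
    also have "\<dots> \<le> (a * (Q/a) powr (2/q)) powr (q/2)" using nb q by (intro powr_mono2) auto
    also have "\<dots> = a powr (q/2-1) * Q" using q a0 Q0 by (intro key_powr) auto
    finally show ?thesis unfolding Q_def .
  qed
  have "(\<Sum>j\<in>{1..<N}. norm (restr (B j) v) powr q) \<le> (\<Sum>j\<in>{1..<N}. real a powr (q/2-1) * qnorm_pow_on (B (j-1)) q v)"
    by (rule sum_mono) (use key in auto)
  also have "\<dots> = real a powr (q/2-1) * (\<Sum>j\<in>{Suc 0..<Suc (len div a)}. qnorm_pow_on (B (j-1)) q v)"
    unfolding N_def One_nat_def by (rule sum_distrib_left[symmetric])
  also have "(\<Sum>j\<in>{Suc 0..<Suc (len div a)}. qnorm_pow_on (B (j-1)) q v) = (\<Sum>j\<in>{0..<len div a}. qnorm_pow_on (B j) q v)"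
    by (simp only: sum.shift_bounds_Suc_ivl) simp
  also have "\<dots> \<le> (\<Sum>j\<in>{..<N}. qnorm_pow_on (B j) q v)"
    by (rule sum_mono2) (auto simp: N_def qnorm_pow_on_def sum_nonneg)
  also have "\<dots> = qnorm_pow_on C q v"
    unfolding qnorm_pow_on_def UNall[symmetric]
    by (rule sum.UNION_disjoint[symmetric]) (use disj in auto)
  finally have fin: "(\<Sum>j\<in>{1..<N}. norm (restr (B j) v) powr q) \<le> real a powr (q/2-1) * qnorm_pow_on C q v"
    by (simp add: mult_left_mono)
  show ?thesis
    apply (rule that[of B N])
    using BC cardB cardK restr_eq fin by auto
qed



lemma le_from_powr: assumes "0 < p" "0 \<le> (z::real)" "z powr p \<le> c"
  shows "z \<le> c powr (1/p)"
proof -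
  have "z = (z powr p) powr (1/p)" using assms by (simp add: powr_powr)
  also have "\<dots> \<le> c powr (1/p)" using assms by (intro powr_mono2) auto
  finally show ?thesis .
qed

lemma alg_main:
  fixes q L U da dsa s a t r b X y z :: real
  assumes q: "0<q" "q\<le>1" and L: "0<L" "L\<le>U" and d: "0\<le>da" "dsa<1" and sa: "0<s" "0<a"
    and nn: "0\<le>r" "0\<le>b" "0\<le>X" "0\<le>y" "0\<le>z"
    and E1: "(1-dsa) * X powr q \<le> b + (1+da) * L powr (-q/2) * a powr (q/2-1) * r"
    and E2: "z powr (q/2) \<le> a powr (q/2-1) * r"
    and E3: "y^2 \<le> U * X^2 * (y+z)"
    and E4: "t \<le> s powr (1-q/2) * y powr (q/2)"
  shows "t \<le> (2 powr (- q / 2) * (1 + sqrt (1 + 4 * (U/L) powr (-2) * ((1+da)/(1-dsa)) powr (- 2 / q))) powr (q / 2)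
             * (U/L) powr q * ((1+da)/(1-dsa)) * (s/a) powr (1 - q / 2)) * r
       + (2 powr (- q / 2) * (1 + sqrt (1 + 4 * (U/L) powr (-2) * ((1+da)/(1-dsa)) powr (- 2 / q))) powr (q / 2)
             * (U/L) powr q * ((1+da)/(1-dsa)) * (s/a) powr (1 - q / 2)) * L powr (q/2) * a powr (1 - q/2) * b / (1 + da)"
proof -
  define kap where "kap = U/L"
  define Dl where "Dl = (1+da)/(1-dsa)"
  define R where "R = r + L powr (q/2) * a powr (1 - q/2) * b / (1 + da)"
  define P where "P = a powr (q/2-1) * R"
  define c2 where "c2 = kap^2 * Dl powr (2/q)"
  define W2 where "W2 = P powr (2/q)"
  define s0 where "s0 = sqrt (1 + 4 * kap powr (-2) * Dl powr (- 2 / q))"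
  define z0 where "z0 = (1 + s0)/2"
  have kap1: "kap \<ge> 1" using L by (simp add: kap_def)
  have Dl0: "Dl > 0" using d by (simp add: Dl_def)
  have R0: "R \<ge> 0" using nn d L sa by (simp add: R_def)
  have P0: "P \<ge> 0" using R0 by (simp add: P_def)
  have c20: "c2 > 0" using kap1 Dl0 by (simp add: c2_def)
  have W20: "W2 \<ge> 0" by (simp add: W2_def)
  have inv_c2: "kap powr (-2) * Dl powr (- 2 / q) = 1 / c2"
    using kap1 Dl0 by (simp add: c2_def powr_minus powr_numeral divide_simps)
  have "s0^2 = 1 + 4 * kap powr (-2) * Dl powr (- 2 / q)" unfolding s0_def
    by (simp add: add_nonneg_nonneg)
  moreover have "4 * kap powr (-2) * Dl powr (- 2 / q) = 4 * (1/c2)" using inv_c2 by (simp only: mult.assoc)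
  ultimately have s0sq: "s0^2 = 1 + 4 / c2" by simp
  have s0ge: "s0 \<ge> 1" unfolding s0_def using kap1 Dl0 by simp
  have z0sq: "z0^2 = z0 + 1/c2" unfolding z0_def using s0sq by (simp add: power2_eq_square field_simps)
  have z0ge: "z0 \<ge> 1" using s0ge by (simp add: z0_def)
  have hL: "L powr (-q/2) * L powr (q/2) = 1" using L by (simp add: powr_add[symmetric])
  have ha: "a powr (q/2-1) * a powr (1-q/2) = 1" using sa by (simp add: powr_add[symmetric])
  have "(1+da) * L powr (-q/2) * P = (1+da) * L powr (-q/2) * a powr (q/2-1) * r
        + (L powr (-q/2) * L powr (q/2)) * (a powr (q/2-1) * a powr (1-q/2)) * ((1+da) * b / (1+da))"
    by (simp add: P_def R_def algebra_simps)
  also have "\<dots> = b + (1+da) * L powr (-q/2) * a powr (q/2-1) * r" using hL ha d by simp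
  finally have E1': "(1-dsa) * X powr q \<le> (1+da) * L powr (-q/2) * P" using E1 by simp
  have Xq: "X powr q \<le> Dl * L powr (-q/2) * P"
    using E1' d by (simp add: Dl_def field_simps)
  have "X^2 \<le> (Dl * L powr (-q/2) * P) powr (2/q)" by (rule sq_le_from_powr[OF q(1) nn(3) Xq])
  also have "\<dots> = Dl powr (2/q) * (1/L) * W2"
  proof -
    have "(Dl * L powr (-q/2) * P) powr (2/q) = Dl powr (2/q) * (L powr (-q/2)) powr (2/q) * P powr (2/q)"
      using Dl0 P0 by (simp add: powr_mult)
    moreover have "(L powr (-q/2)) powr (2/q) = 1/L"
    proof -
      have "(L powr (-q/2)) powr (2/q) = L powr (-1)" using q by (simp add: powr_powr)
      then show ?thesis using L by (simp add: powr_minus divide_simps)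
    qed
    ultimately show ?thesis by (simp add: W2_def)
  qed
  finally have X2: "X^2 \<le> Dl powr (2/q) * (1/L) * W2" .
  have E2r: "r \<le> R" using nn d L sa by (simp add: R_def)
  have "z powr (q/2) \<le> P" using E2 E2r unfolding P_def by (meson mult_left_mono order.trans powr_ge_zero)
  hence zW: "z \<le> W2" unfolding W2_def
    using le_from_powr[of "q/2" z "P"] q nn by simp
  have "y^2 \<le> U * X^2 * (y+z)" by (rule E3)
  also have "\<dots> \<le> U * (Dl powr (2/q) * (1/L) * W2) * (y + W2)"
    using X2 zW L nn by (intro mult_mono) auto
  also have "\<dots> = kap * Dl powr (2/q) * W2 * (y + W2)" using L by (simp add: kap_def)
  also have "\<dots> \<le> c2 * W2 * (y + W2)"
  proof -
    have "kap \<le> kap^2" using kap1 by (simp add: power2_eq_square)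
    then show ?thesis unfolding c2_def using W20 nn by (intro mult_right_mono) auto
  qed
  finally have Q: "y^2 \<le> c2 * W2 * (y + W2)" .
  define m where "m = c2 * W2"
  have m0: "m \<ge> 0" using c20 W20 by (simp add: m_def)
  have Y0eq: "(m*z0)^2 = m * (m*z0) + m * W2"
    using z0sq c20 by (simp add: m_def power2_eq_square field_simps)
  have ybound: "y \<le> m * z0"
  proof (rule ccontr)
    assume "\<not> y \<le> m * z0"
    hence gt: "y > m*z0" by simp
    have "m*z0 \<ge> m" using m0 z0ge by (simp add: mult_left_mono[of 1 z0 m, simplified])
    hence "(y - m*z0) * (y + m*z0 - m) > 0" using gt m0 by (intro mult_pos_pos) auto
    hence "y^2 - m*y > (m*z0)^2 - m*(m*z0)" by (simp add: power2_eq_square algebra_simps)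
    thus False using Q Y0eq by (simp add: m_def power2_eq_square algebra_simps)
  qed
  have "y powr (q/2) \<le> (c2 * W2 * z0) powr (q/2)" using ybound nn q by (intro powr_mono2) (auto simp: m_def)
  also have "\<dots> = kap powr q * Dl * P * z0 powr (q/2)"
  proof -
    have k2: "(kap^2) powr (q/2) = kap powr q"
    proof -
      have "kap^2 = kap powr 2" using kap1 by (simp add: powr_numeral)
      then show ?thesis using q by (simp add: powr_powr)
    qed
    have d2: "(Dl powr (2/q)) powr (q/2) = Dl" using q Dl0 by (simp add: powr_powr)
    have "c2 powr (q/2) = kap powr q * Dl" unfolding c2_def
      using kap1 Dl0 by (simp only: powr_mult[of "kap^2" "Dl powr (2/q)"] k2 d2 zero_le_power2 powr_ge_zero)
    moreover have "W2 powr (q/2) = P" using P0 q by (simp add: W2_def powr_powr)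
    moreover have "(c2 * W2 * z0) powr (q/2) = c2 powr (q/2) * W2 powr (q/2) * z0 powr (q/2)"
      using c20 W20 z0ge by (simp add: powr_mult)
    ultimately show ?thesis by simp
  qed
  finally have yq: "y powr (q/2) \<le> kap powr q * Dl * P * z0 powr (q/2)" .
  have th: "2 powr (- q / 2) * (1 + s0) powr (q / 2) = z0 powr (q/2)"
    using s0ge by (simp add: z0_def powr_divide powr_minus divide_simps)
  have rho: "s powr (1-q/2) * a powr (q/2-1) = (s/a) powr (1-q/2)"
  proof -
    have ae: "a powr (1-q/2) > 0" using sa by simp
    have "a powr (q/2-1) = 1 / a powr (1-q/2)" using ha ae by (simp add: eq_divide_eq)
    then show ?thesis using sa by (simp add: powr_divide)
  qed
  have "t \<le> s powr (1-q/2) * (kap powr q * Dl * P * z0 powr (q/2))"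
    using E4 yq sa by (meson mult_left_mono order.trans powr_ge_zero)
  also have "\<dots> = (z0 powr (q/2) * kap powr q * Dl * (s powr (1-q/2) * a powr (q/2-1))) * R"
    by (simp add: P_def algebra_simps)
  also have "\<dots> = (z0 powr (q/2) * kap powr q * Dl * (s/a) powr (1-q/2)) * R" by (simp only: rho)
  finally show ?thesis
    unfolding s0_def[symmetric] th[symmetric] kap_def[symmetric] Dl_def[symmetric] R_def
    by (simp add: algebra_simps)
qed



lemma alg_theta:
  fixes q kap Dl rho :: real
  assumes q: "0<q" "q\<le>1" and kap1: "kap \<ge> 1" and Dl0: "Dl > 0" and rho0: "rho > 0"
    and cond: "rho powr (1 - q/2) * (rho powr (2/q - 1) + 1) powr (q/2) * kap powr q * Dl < 1"
  shows "2 powr (- q / 2) * (1 + sqrt (1 + 4 * kap powr (-2) * Dl powr (- 2 / q))) powr (q / 2)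
             * kap powr q * Dl * rho powr (1 - q / 2) < 1"
proof -
  define c2 where "c2 = kap^2 * Dl powr (2/q)"
  define r0 where "r0 = rho powr (2/q - 1)"
  define s0 where "s0 = sqrt (1 + 4 * kap powr (-2) * Dl powr (- 2 / q))"
  define z0 where "z0 = (1 + s0)/2"
  have c20: "c2 > 0" using kap1 Dl0 by (simp add: c2_def)
  have r00: "r0 > 0" using rho0 by (simp add: r0_def)
  have inv_c2: "kap powr (-2) * Dl powr (- 2 / q) = 1 / c2"
    using kap1 Dl0 by (simp add: c2_def powr_minus powr_numeral divide_simps)
  have "s0^2 = 1 + 4 * kap powr (-2) * Dl powr (- 2 / q)" unfolding s0_def
    by (simp add: add_nonneg_nonneg)
  moreover have "4 * kap powr (-2) * Dl powr (- 2 / q) = 4 * (1/c2)" using inv_c2 by (simp only: mult.assoc)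
  ultimately have s0sq: "s0^2 = 1 + 4 / c2" by simp
  have s0ge: "s0 \<ge> 1" unfolding s0_def using kap1 Dl0 by simp
  have z0sq: "z0^2 = z0 + 1/c2" unfolding z0_def using s0sq by (simp add: power2_eq_square field_simps)
  have z0ge: "z0 \<ge> 1" using s0ge by (simp add: z0_def)
  have th: "2 powr (- q / 2) * (1 + s0) powr (q / 2) = z0 powr (q/2)"
    using s0ge by (simp add: z0_def powr_divide powr_minus divide_simps)
  define \<theta> where "\<theta> = z0 powr (q/2) * kap powr q * Dl * rho powr (1 - q / 2)"
  have kq: "(kap powr q) powr (2/q) = kap^2"
  proof -
    have "(kap powr q) powr (2/q) = kap powr 2" using q by (simp add: powr_powr)
    then show ?thesis using kap1 by (simp add: powr_numeral)
  qed
  have rq: "(rho powr (1 - q/2)) powr (2/q) = r0"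
  proof -
    have "(1 - q/2) * (2/q) = 2/q - 1" using q by (simp add: field_simps)
    then show ?thesis unfolding r0_def by (simp add: powr_powr)
  qed
  have zq: "(z0 powr (q/2)) powr (2/q) = z0" using q z0ge by (simp add: powr_powr)
  have th2: "\<theta> powr (2/q) = z0 * c2 * r0"
  proof -
    have "\<theta> powr (2/q) = (z0 powr (q/2)) powr (2/q) * (kap powr q) powr (2/q) * Dl powr (2/q) * (rho powr (1 - q/2)) powr (2/q)"
      unfolding \<theta>_def using Dl0 by (simp add: powr_mult)
    then show ?thesis unfolding kq rq zq c2_def by simp
  qed
  define G where "G = rho powr (1 - q/2) * (r0 + 1) powr (q/2) * kap powr q * Dl"
  have G0: "G \<ge> 0" using Dl0 by (simp add: G_def)
  have G1: "G < 1" using cond by (simp add: G_def r0_def)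
  have "G powr (2/q) = r0 * (r0 + 1) * c2"
  proof -
    have "G powr (2/q) = (rho powr (1 - q/2)) powr (2/q) * ((r0 + 1) powr (q/2)) powr (2/q) * (kap powr q) powr (2/q) * Dl powr (2/q)"
      unfolding G_def using Dl0 r00 by (simp add: powr_mult)
    moreover have "((r0 + 1) powr (q/2)) powr (2/q) = r0 + 1" using q r00 by (simp add: powr_powr)
    ultimately show ?thesis unfolding kq rq c2_def by simp
  qed
  moreover have "G powr (2/q) < 1" using G0 G1 q powr_less_mono2[of "2/q" G 1] by simp
  ultimately have A: "r0 * (r0 + 1) * c2 < 1" by simp
  define t0 where "t0 = c2 * r0"
  have t00: "t0 > 0" using c20 r00 by (simp add: t0_def)
  have "z0 * t0 < 1"
  proof (rule ccontr)
    assume "\<not> z0 * t0 < 1"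
    hence u1: "z0 * t0 \<ge> 1" by simp
    have icz: "1/c2 = z0^2 - z0" using z0sq by simp
    have "r0 * (r0 + 1) * c2 = t0^2 * (1/c2) + t0" using c20 by (simp add: t0_def power2_eq_square field_simps)
    also have "\<dots> = (z0*t0)^2 - t0 * (z0*t0 - 1)" unfolding icz by (simp add: power2_eq_square algebra_simps)
    also have "\<dots> \<ge> z0*t0"
    proof -
      have "t0 \<le> z0 * t0" using z0ge t00 by simp
      hence "(z0*t0 - 1) * (z0*t0 - t0) \<ge> 0" using u1 by simp
      thus ?thesis by (simp add: power2_eq_square algebra_simps)
    qed
    finally show False using A u1 by simp
  qed
  hence "\<theta> powr (2/q) < 1" using th2 by (simp add: t0_def mult.assoc)
  moreover have "\<theta> = (\<theta> powr (2/q)) powr (q/2)" using q Dl0 by (simp add: powr_powr \<theta>_def)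
  ultimately have "\<theta> < 1" using q powr_less_mono2[of "q/2" "\<theta> powr (2/q)" 1] by simp
  then show ?thesis unfolding \<theta>_def s0_def[symmetric] th[symmetric] by (simp add: algebra_simps)
qed



lemma rip_mono: "rip D A q k \<delta> \<Longrightarrow> k' \<le> k \<Longrightarrow> rip D A q k' \<delta>"
  unfolding rip_def sparse_def by (meson order.trans)

lemma rip_at_const:
  assumes "\<exists>\<delta>. rip D A q k \<delta>"
  shows "rip D A q k (rip_const D A q k)"
proof -
  define S where "S = {\<delta>. rip D A q k \<delta>}"
  obtain \<delta>1 where d1: "\<delta>1 \<in> S" using assms S_def by auto
  have ne: "S \<noteq> {}" using d1 by auto
  have lb: "\<forall>x\<in>S. 0 \<le> x" unfolding S_def rip_def by auto
  have bdd: "bdd_below S" using lb by (auto intro: bdd_belowI)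
  define \<delta>0 where "\<delta>0 = Inf S"
  have eq: "rip_const D A q k = \<delta>0" unfolding rip_const_def \<delta>0_def S_def ..
  have g0: "0 \<le> \<delta>0" unfolding \<delta>0_def using ne lb by (intro cInf_greatest) auto
  have "\<delta>0 \<le> \<delta>1" unfolding \<delta>0_def using d1 bdd by (rule cInf_lower)
  moreover have "\<delta>1 < 1" using d1 unfolding S_def rip_def by auto
  ultimately have l1: "\<delta>0 < 1" by simp
  have approx: "\<exists>\<delta>\<in>S. \<delta> < \<delta>0 + e" if "e > 0" for e
    using cInf_less_iff[OF ne bdd, of "\<delta>0 + e"] that unfolding \<delta>0_def by simp
  have main: "(1 - \<delta>0) * c \<le> x \<and> x \<le> (1 + \<delta>0) * c"
    if c0: "0 \<le> c" and H: "\<forall>\<delta>\<in>S. (1 - \<delta>) * c \<le> x \<and> x \<le> (1 + \<delta>) * c" for c x :: real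
  proof
    show "(1 - \<delta>0) * c \<le> x"
    proof (rule field_le_epsilon)
      fix e :: real assume e: "0 < e"
      obtain \<delta> where d: "\<delta> \<in> S" "\<delta> < \<delta>0 + e/(c+1)" using approx[of "e/(c+1)"] e c0 by auto
      have "(\<delta> - \<delta>0) * c \<le> e/(c+1) * c" using d c0 by (intro mult_right_mono) auto
      also have "\<dots> \<le> e" using e c0 by (simp add: field_simps)
      finally show "(1 - \<delta>0) * c \<le> x + e" using H d by (smt (verit) left_diff_distrib)
    qed
    show "x \<le> (1 + \<delta>0) * c"
    proof (rule field_le_epsilon)
      fix e :: real assume e: "0 < e"
      obtain \<delta> where d: "\<delta> \<in> S" "\<delta> < \<delta>0 + e/(c+1)" using approx[of "e/(c+1)"] e c0 by auto
      have "(\<delta> - \<delta>0) * c \<le> e/(c+1) * c" using d c0 by (intro mult_right_mono) auto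
      also have "\<dots> \<le> e" using e c0 by (simp add: field_simps)
      finally show "x \<le> (1 + \<delta>0) * c + e" using H d by (smt (verit) distrib_right)
    qed
  qed
  show ?thesis unfolding eq rip_def
  proof (intro conjI[OF g0] conjI[OF l1] allI impI)
    fix v :: "real^'a" assume sp: "sparse k v"
    show "(1 - \<delta>0) * norm (dagger D *v v) powr q \<le> qnorm_pow q (A *v (dagger D *v v)) \<and>
          qnorm_pow q (A *v (dagger D *v v)) \<le> (1 + \<delta>0) * norm (dagger D *v v) powr q"
      by (rule main) (use sp in \<open>auto simp: S_def rip_def\<close>)
  qed
qed



lemma mv_sum: "(M::real^'n^'m) *v (\<Sum>j\<in>J. x j) = (\<Sum>j\<in>J. M *v x j)"
  by (induction J rule: infinite_finite_induct) (auto simp: matrix_vector_right_distrib)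

lemma dnorm_q:
  fixes D :: "real^'d^'n"
  assumes "frame_bounds D L U" "0 < L" "0 < q"
  shows "norm (dagger D *v w) powr q \<le> L powr (-q/2) * norm w powr q"
proof -
  have "(norm (dagger D *v w))\<^sup>2 \<le> (norm w)\<^sup>2 / L" using dagger_norm[OF assms(1,2), of w] assms(2)
    by (simp add: field_simps)
  hence "norm (dagger D *v w) powr q \<le> ((norm w)\<^sup>2 / L) powr (q/2)"
    using assms by (simp add: powr_sq[of "norm (dagger D *v w)" q] powr_mono2)
  also have "\<dots> = L powr (-q/2) * norm w powr q"
    using assms by (simp add: powr_divide powr_sq[of "norm w" q] powr_minus divide_simps)
  finally show ?thesis .
qed

theorem lemma2p8:
  fixes D :: "real^'d^'n" and A :: "real^'n^'m" and h :: "real^'n"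
    and q L U :: real and s a :: nat and T :: "'d set"
  assumes "0 < q" "q \<le> 1"
    and "0 < L" "L \<le> U" "frame_bounds D L U"
    and "0 < s" "s < a"
    and "\<exists>\<delta>. rip D A q (s + a) \<delta>"
    and "card T = s"
    and "\<forall>i\<in>T. \<forall>j\<in>- T. \<bar>(transpose D *v h) $ j\<bar> \<le> \<bar>(transpose D *v h) $ i\<bar>"
  shows
    "let \<kappa> = U / L; \<rho> = real s / real a;
         \<delta>a = rip_const D A q a; \<delta>sa = rip_const D A q (s + a);
         \<Delta> = (1 + \<delta>a) / (1 - \<delta>sa);
         \<theta> = 2 powr (- q / 2) * (1 + sqrt (1 + 4 * \<kappa> powr (-2) * \<Delta> powr (- 2 / q))) powr (q / 2)
             * \<kappa> powr q * \<Delta> * \<rho> powr (1 - q / 2)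
     in qnorm_pow_on T q (transpose D *v h)
          \<le> \<theta> * qnorm_pow_on (- T) q (transpose D *v h)
            + \<theta> * L powr (q / 2) * real a powr (1 - q / 2) * qnorm_pow q (A *v h) / (1 + \<delta>a)
        \<and> (\<rho> powr (1 - q / 2) * (\<rho> powr (2 / q - 1) + 1) powr (q / 2) * \<kappa> powr q * (1 + \<delta>a)
             < 1 - \<delta>sa \<longrightarrow> \<theta> < 1)"
proof -
  have q: "0 < q" "q \<le> 1" using assms by auto
  have fr: "frame_bounds D L U" and L0: "0 < L" using assms by auto
  define v where "v = transpose D *v h"
  define da where "da = rip_const D A q a"
  define dsa where "dsa = rip_const D A q (s+a)"
  obtain \<delta>1 where d1: "rip D A q (s+a) \<delta>1" using assms(8) by auto
  have ripsa: "rip D A q (s+a) dsa" unfolding dsa_def using assms(8) by (rule rip_at_const)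
  have ripa: "rip D A q a da" unfolding da_def using rip_mono[OF d1, of a] by (intro rip_at_const) auto
  have da: "0 \<le> da" "da < 1" using ripa unfolding rip_def by auto
  have dsa: "0 \<le> dsa" "dsa < 1" using ripsa unfolding rip_def by auto
  have a0: "a > 0" using assms by simp
  obtain B :: "nat \<Rightarrow> 'd set" and N :: nat where B0: "B 0 \<subseteq> -T" and cardB: "\<And>j. card (B j) \<le> a"
     and rest: "restr (-T - B 0) v = (\<Sum>j\<in>{1..<N}. restr (B j) v)"
     and tail: "(\<Sum>j\<in>{1..<N}. norm (restr (B j) v) powr q) \<le> real a powr (q/2-1) * qnorm_pow_on (-T) q v"
    by (rule blocks[OF a0 q, where v=v and C="-T"]) blast
  define S01 where "S01 = T \<union> B 0"
  define v01 where "v01 = restr S01 v"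
  define vR where "vR = restr (-S01) v"
  have "-S01 = -T - B 0" by (auto simp: S01_def)
  hence vR_sum: "vR = (\<Sum>j\<in>{1..<N}. restr (B j) v)" using rest by (simp add: vR_def)
  have vsplit: "v = v01 + vR" by (simp add: v01_def vR_def vec_eq_iff)
  have hv: "h = dagger D *v v" using dagger_left[OF fr L0] by (simp add: v_def)
  define X where "X = norm (dagger D *v v01)"
  define b where "b = qnorm_pow q (A *v h)"
  define r where "r = qnorm_pow_on (-T) q v"
  define t where "t = qnorm_pow_on T q v"
  define y where "y = (norm v01)^2"
  define z where "z = (norm vR)^2"
  define Y where "Y = (\<lambda>j. A *v (dagger D *v restr (B j) v))"
  have r0: "r \<ge> 0" unfolding r_def qnorm_pow_on_def by (simp add: sum_nonneg)
  have b0: "b \<ge> 0" unfolding b_def qnorm_pow_def qnorm_pow_on_def by (simp add: sum_nonneg)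
  have lin: "A *v (dagger D *v v01) = A *v h - (\<Sum>j\<in>{1..<N}. Y j)"
  proof -
    have "A *v h = A *v (dagger D *v v01) + A *v (dagger D *v vR)"
      using hv vsplit by (metis matrix_vector_right_distrib)
    moreover have "A *v (dagger D *v vR) = (\<Sum>j\<in>{1..<N}. Y j)"
      unfolding vR_sum Y_def by (simp add: mv_sum)
    ultimately show ?thesis by simp
  qed
  have sp01: "sparse (s+a) v01"
  proof -
    have "card S01 \<le> card T + card (B 0)" unfolding S01_def by (rule card_Un_le)
    also have "\<dots> \<le> s + a" using assms(9) cardB[of 0] by simp
    finally show ?thesis unfolding v01_def by (rule restr_sparse)
  qed
  have low: "(1-dsa) * X powr q \<le> qnorm_pow q (A *v (dagger D *v v01))"
    using ripsa sp01 unfolding rip_def X_def by blast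
  have upj: "qnorm_pow q (Y j) \<le> (1+da) * (L powr (-q/2) * norm (restr (B j) v) powr q)" for j
  proof -
    have "sparse a (restr (B j) v)" using cardB[of j] by (rule restr_sparse)
    hence "qnorm_pow q (Y j) \<le> (1+da) * norm (dagger D *v restr (B j) v) powr q"
      using ripa unfolding rip_def Y_def by blast
    also have "\<dots> \<le> (1+da) * (L powr (-q/2) * norm (restr (B j) v) powr q)"
      using da dnorm_q[OF fr L0 q(1)] by (intro mult_left_mono) auto
    finally show ?thesis .
  qed
  have "qnorm_pow q (A *v (dagger D *v v01)) \<le> b + qnorm_pow q (\<Sum>j\<in>{1..<N}. Y j)"
    unfolding lin b_def using qnorm_add[OF q, of "A *v h" "- (\<Sum>j\<in>{1..<N}. Y j)"]
    by (simp add: qnorm_minus)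
  also have "\<dots> \<le> b + (\<Sum>j\<in>{1..<N}. qnorm_pow q (Y j))"
    using qnorm_sum[OF q, of "{1..<N}" Y] by simp
  also have "\<dots> \<le> b + (\<Sum>j\<in>{1..<N}. (1+da) * (L powr (-q/2) * norm (restr (B j) v) powr q))"
    using upj by (simp add: sum_mono)
  also have "\<dots> = b + (1+da) * L powr (-q/2) * (\<Sum>j\<in>{1..<N}. norm (restr (B j) v) powr q)"
    by (simp add: sum_distrib_left mult.assoc)
  also have "\<dots> \<le> b + (1+da) * L powr (-q/2) * (real a powr (q/2-1) * r)"
    using tail da unfolding r_def by (simp add: mult_left_mono)
  finally have E1: "(1-dsa) * X powr q \<le> b + (1+da) * L powr (-q/2) * real a powr (q/2-1) * r"
    using low by (simp add: mult.assoc)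
  have "norm vR powr q \<le> (\<Sum>j\<in>{1..<N}. norm (restr (B j) v)) powr q"
    unfolding vR_sum using q by (intro powr_mono2 norm_sum) auto
  also have "\<dots> \<le> (\<Sum>j\<in>{1..<N}. norm (restr (B j) v) powr q)"
    using q by (intro powr_sum_le) auto
  also have "\<dots> \<le> real a powr (q/2-1) * r" using tail unfolding r_def .
  finally have E2: "z powr (q/2) \<le> real a powr (q/2-1) * r"
    unfolding z_def using powr_sq[of "norm vR" q] by simp
  have yin: "y = inner v01 (transpose D *v h)" unfolding y_def v01_def v_def[symmetric]
    by (simp add: inner_restr)
  have yle: "y \<le> sqrt U * X * norm v"
    unfolding yin X_def v_def by (rule dagger_inner[OF fr L0])
  have nv: "(norm v)^2 = y + z" unfolding y_def z_def v01_def vR_def by (rule norm_split)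
  have y0: "y \<ge> 0" by (simp add: y_def)
  have z0: "z \<ge> 0" by (simp add: z_def)
  have X0: "X \<ge> 0" by (simp add: X_def)
  have U0: "U \<ge> 0" using assms by simp
  have "y^2 \<le> (sqrt U * X * norm v)^2" using yle y0 by (intro power_mono) auto
  also have "\<dots> = U * X^2 * (y + z)" using U0 nv by (simp add: power_mult_distrib)
  finally have E3: "y^2 \<le> U * X^2 * (y + z)" .
  have "t = (\<Sum>i\<in>T. ((v$i)^2) powr (q/2))"
    unfolding t_def qnorm_pow_on_def by (intro sum.cong) (auto simp: powr_sq[of "\<bar>_\<bar>" q])
  also have "\<dots> \<le> real s powr (1 - q/2) * (\<Sum>i\<in>T. (v$i)^2) powr (q/2)"
    using q assms(6,9) by (intro holder_pow) (auto simp: card_ge_0_finite)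
  also have "\<dots> \<le> real s powr (1 - q/2) * y powr (q/2)"
  proof -
    have "(\<Sum>i\<in>T. (v$i)^2) \<le> (\<Sum>i\<in>S01. (v$i)^2)" unfolding S01_def by (intro sum_mono2) auto
    hence "(\<Sum>i\<in>T. (v$i)^2) \<le> y" unfolding y_def v01_def norm_restr_sq .
    thus ?thesis using q by (intro mult_left_mono powr_mono2) (auto simp: sum_nonneg)
  qed
  finally have E4: "t \<le> real s powr (1 - q/2) * y powr (q/2)" .
  have s0: "0 < real s" and ar0: "0 < real a" using assms by auto
  note part1 = alg_main[OF q L0 assms(4) da(1) dsa(2) s0 ar0 r0 b0 X0 y0 z0 E1 E2 E3 E4]
  have part2: "2 powr (- q / 2) * (1 + sqrt (1 + 4 * (U/L) powr (-2) * ((1+da)/(1-dsa)) powr (- 2 / q))) powr (q / 2)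
             * (U/L) powr q * ((1+da)/(1-dsa)) * (real s / real a) powr (1 - q / 2) < 1"
    if c: "(real s / real a) powr (1 - q / 2) * ((real s / real a) powr (2 / q - 1) + 1) powr (q / 2) * (U/L) powr q * (1 + da)
             < 1 - dsa"
  proof (rule alg_theta[OF q])
    show "1 \<le> U/L" using assms by simp
    show "0 < (1+da)/(1-dsa)" using da dsa by simp
    show "0 < real s / real a" using s0 ar0 by simp
    show "(real s / real a) powr (1 - q / 2) * ((real s / real a) powr (2 / q - 1) + 1) powr (q / 2) * (U/L) powr q * ((1+da)/(1-dsa)) < 1"
      using c dsa by (simp add: field_simps)
  qed
  show ?thesis unfolding Let_def
    using part1 part2 unfolding t_def r_def b_def v_def da_def dsa_def by blast
qed

end
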